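(* Let $N$ be a finite set of $n\ge 1$ agents, each with value $v_i\ge 0$ and budget $b_i\ge 0$, and let $m>0$. Let $j$ be an agent chosen uniformly at random from $N$. Then $$\Pr\Big[\mathrm{OPT}(N\setminus\{j\},m)\ \ge\ \tfrac12\,\mathrm{OPT}(N,m)\Big]\ \ge\ 1-\frac1n .$$
   Context: For a set $S$ of agents and an amount $k>0$ of items, the optimal uniform-price revenue is $\mathrm{OPT}(S,k)=\max_{p>0}\ \min\Big(\sum_{i\in S,\ v_i\ge p}\frac{b_i}{p},\ k\Big)\cdot p$, i.e., the maximum revenue from selling at most $k$ items to agents of $S$ at a single price per item $p$, where each agent with $v_i\ge p$ buys as much as her budget allows; $p^\ast_{S,k}$ denotes a maximizing price. *)

theory Defs
  imports "HOL-Probability.Probability"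
begin

definition revenue :: "('a \<Rightarrow> real) \<Rightarrow> ('a \<Rightarrow> real) \<Rightarrow> 'a set \<Rightarrow> real \<Rightarrow> real \<Rightarrow> real" where
  "revenue v b S k p = min (\<Sum>i\<in>{i\<in>S. v i \<ge> p}. b i / p) k * p"

text \<open>Optimal uniform-price revenue OPT(S,k) = max over p > 0 of the revenue
  (rendered as a supremum; the maximum is attained for finite S).\<close>
definition OPT :: "('a \<Rightarrow> real) \<Rightarrow> ('a \<Rightarrow> real) \<Rightarrow> 'a set \<Rightarrow> real \<Rightarrow> real" where
  "OPT v b S k = (SUP p\<in>{0<..}. revenue v b S k p)"

end

theory Submission
  imports Defs
begin

lemma rev_alt:
  assumes "p > 0"
  shows "revenue v b S k p = min (\<Sum>i\<in>{i\<in>S. v i \<ge> p}. b i) (k * p)"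
proof -
  have "(\<Sum>i\<in>{i\<in>S. v i \<ge> p}. b i / p) = (\<Sum>i\<in>{i\<in>S. v i \<ge> p}. b i) / p"
    by (simp add: sum_divide_distrib)
  moreover have "min (X / p) k * p = min X (k * p)" for X
  proof (cases "X \<le> k * p")
    case True
    hence "X / p \<le> k" using assms by (simp add: pos_divide_le_eq)
    thus ?thesis using True assms by (simp add: min_def)
  next
    case False
    hence "\<not> X / p \<le> k" using assms by (simp add: pos_divide_le_eq)
    thus ?thesis using False assms by (simp add: min_def)
  qed
  ultimately show ?thesis unfolding revenue_def by simp
qed

lemma rev_bdd:
  assumes "finite S" "\<And>i. i \<in> S \<Longrightarrow> b i \<ge> 0"
  shows "bdd_above (revenue v b S k ` {0<..})"
proof (rule bdd_aboveI2)
  fix p :: real assume "p \<in> {0<..}"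
  hence p: "p > 0" by simp
  have "(\<Sum>i\<in>{i\<in>S. v i \<ge> p}. b i) \<le> sum b S"
    by (rule sum_mono2) (use assms in auto)
  thus "revenue v b S k p \<le> sum b S" unfolding rev_alt[OF p] by (rule order_trans[OF min.cobounded1])
qed

lemma opt_ge:
  assumes "finite S" "\<And>i. i \<in> S \<Longrightarrow> b i \<ge> 0" "p > 0"
  shows "revenue v b S k p \<le> OPT v b S k"
  unfolding OPT_def by (rule cSUP_upper) (use assms rev_bdd[OF assms(1,2)] in auto)

lemma key:
  assumes "finite N" "\<And>i. i \<in> N \<Longrightarrow> b i \<ge> 0" "p > 0" "m > 0"
    and "j1 \<noteq> j2"
  shows "revenue v b N m p \<le> revenue v b (N - {j1}) m p + revenue v b (N - {j2}) m p"
proof -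
  define A where "A = {i\<in>N. v i \<ge> p}"
  have fA: "finite A" using assms(1) by (simp add: A_def)
  have A1: "{i\<in>N-{j1}. v i \<ge> p} = A - {j1}" and A2: "{i\<in>N-{j2}. v i \<ge> p} = A - {j2}"
    by (auto simp: A_def)
  define c1 where "c1 = (if j1 \<in> A then b j1 else 0)"
  define c2 where "c2 = (if j2 \<in> A then b j2 else 0)"
  have s1: "sum b (A - {j1}) = sum b A - c1" using fA
    by (simp add: c1_def sum_diff1)
  have s2: "sum b (A - {j2}) = sum b A - c2" using fA
    by (simp add: c2_def sum_diff1)
  have nn: "c1 \<ge> 0" "c2 \<ge> 0" using assms(2) by (auto simp: c1_def c2_def A_def)
  have "c1 + c2 = sum b (A \<inter> {j1, j2})"
    using assms(5) by (auto simp: c1_def c2_def Int_insert_right)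
  also have "\<dots> \<le> sum b A"
    by (rule sum_mono2) (use fA assms(2) in \<open>auto simp: A_def\<close>)
  finally have le: "c1 + c2 \<le> sum b A" .
  show ?thesis unfolding rev_alt[OF assms(3)] A1 A2 s1 s2
    using le nn assms(3,4) unfolding A_def[symmetric]
    by (simp add: min_def)
qed

theorem lemma2:
  fixes N :: "'a set" and v b :: "'a \<Rightarrow> real" and m :: real
  assumes "finite N" and "N \<noteq> {}"
    and "\<And>i. i \<in> N \<Longrightarrow> v i \<ge> 0"
    and "\<And>i. i \<in> N \<Longrightarrow> b i \<ge> 0"
    and "m > 0"
  shows "measure_pmf.prob (pmf_of_set N) {j. OPT v b (N - {j}) m \<ge> OPT v b N m / 2}
           \<ge> 1 - 1 / real (card N)"
proof -
  define G where "G = {j. OPT v b (N - {j}) m \<ge> OPT v b N m / 2}"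
  define Bd where "Bd = N - G"
  have sub: "\<And>j. finite (N - {j})" "\<And>j i. i \<in> N - {j} \<Longrightarrow> b i \<ge> 0"
    using assms by auto
  have two: False if "j1 \<in> Bd" "j2 \<in> Bd" "j1 \<noteq> j2" for j1 j2
  proof -
    have lt: "OPT v b (N - {j1}) m + OPT v b (N - {j2}) m < OPT v b N m"
      using that by (auto simp: Bd_def G_def)
    have "OPT v b N m \<le> OPT v b (N - {j1}) m + OPT v b (N - {j2}) m"
      unfolding OPT_def[of v b N]
    proof (rule cSUP_least)
      show "{0<..} \<noteq> ({}::real set)" by auto
      fix p :: real assume "p \<in> {0<..}"
      hence p: "p > 0" by simp
      have "revenue v b N m p \<le> revenue v b (N - {j1}) m p + revenue v b (N - {j2}) m p"
        by (rule key) (use assms p that(3) in auto)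
      also have "\<dots> \<le> OPT v b (N - {j1}) m + OPT v b (N - {j2}) m"
        using opt_ge[OF sub p] by (meson add_mono)
      finally show "revenue v b N m p \<le> OPT v b (N - {j1}) m + OPT v b (N - {j2}) m" .
    qed
    thus False using lt by linarith
  qed
  have cB: "card Bd \<le> 1"
  proof -
    have "finite Bd" using assms(1) by (simp add: Bd_def)
    thus ?thesis using two card_le_Suc0_iff_eq[of Bd] by auto
  qed
  have eq: "N \<inter> G = N - Bd" by (auto simp: Bd_def)
  have BN: "Bd \<subseteq> N" by (auto simp: Bd_def)
  have cN: "card N > 0" using assms(1,2) by (simp add: card_gt_0_iff)
  have "measure_pmf.prob (pmf_of_set N) G = real (card (N - Bd)) / real (card N)"
    using assms(1,2) by (simp add: measure_pmf_of_set eq)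
  also have "card (N - Bd) = card N - card Bd"
    using BN assms(1) by (simp add: card_Diff_subset finite_subset)
  also have "real (card N - card Bd) / real (card N) \<ge> 1 - 1 / real (card N)"
    using cB cN by (simp add: field_simps of_nat_diff)
  finally show ?thesis unfolding G_def .
qed

end
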